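(* Every top-choice social choice function is pseudomonotone, and hence for every $\varepsilon>0$ there is a lex-truthful randomized mechanism that $\varepsilon$-implements it.
   Context: Setting: agents $N=\{1,\dots,n\}$, finite outcome set $O$, each agent $j$ has a set $\Sigma_j$ of allowed strict total orders on $O$, $\Sigma=\prod_j\Sigma_j$; $\succ(1)$ denotes the top outcome of $\succ$ and $\mathrm{pos}_\succ(o)$ the position of $o$. A social choice function $f:\Sigma\to O$ is top-choice if $f(\succ)=g(\succ_1(1),\dots,\succ_n(1))$ for some $g:O^n\to O$ such that for all $j$, all $o_{-j}\in O^{n-1}$ and all $o\in O$: if $g(o,o_{-j})=o'$ then $g(o',o_{-j})=o'$ (here $o$ is in coordinate $j$). $f$ is pseudomonotone if for every $j$, $\succ_{-j}$, $\succ_j,\succ'_j\in\Sigma_j$, with $o=f(\succ_j,\succ_{-j})$, $o'=f(\succ'_j,\succ_{-j})$: either $o=o'$ or $o\succ_j o'$, or there is $o''$ with $o''\succ_j o'$ and $\mathrm{pos}_{\succ_j}(o'')<\mathrm{pos}_{\succ'_j}(o'')$. A randomized mechanism $\varepsilon$-implements $f$ if $\Pr[\mathcal{M}(\succ)=f(\succ)]\ge1-\varepsilon$ for all $\succ$. For lotteries $p\ne q$, $p$ lex-dominates $q$ w.r.t. $\succ$ if at the first position $i$ (in the order $\succ$) where $p(\succ(i))\ne q(\succ(i))$ we have $p(\succ(i))>q(\succ(i))$. $\mathcal{M}$ is lex-truthful if for all $j,\succ_j,\succ'_j,\succ_{-j}$, either $\mathcal{M}(\succ_j,\succ_{-j})=\mathcal{M}(\succ'_j,\succ_{-j})$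 or the former lex-dominates the latter w.r.t. $\succ_j$. *)

theory Defs
  imports "HOL-Probability.Probability_Mass_Function"
begin

text \<open>A strict total order on the outcomes is represented by a list enumerating
  all outcomes without repetition, best first: the top outcome is hd,
  the (0-based) position of an outcome is its index.\<close>

definition is_order :: "'o list \<Rightarrow> bool" where
  "is_order xs \<longleftrightarrow> distinct xs \<and> set xs = UNIV"

definition top :: "'o list \<Rightarrow> 'o" where
  "top xs = hd xs"

definition pos :: "'o list \<Rightarrow> 'o \<Rightarrow> nat" where
  "pos xs a = (LEAST i. i < length xs \<and> xs ! i = a)"

definition prefers :: "'o list \<Rightarrow> 'o \<Rightarrow> 'o \<Rightarrow> bool" where
  "prefers xs a b \<longleftrightarrow> pos xs a < pos xs b"

definition valid_domain :: "('a \<Rightarrow> 'o list set) \<Rightarrow> bool" where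
  "valid_domain Sig \<longleftrightarrow> (\<forall>j. \<forall>xs\<in>Sig j. is_order xs)"

definition profiles :: "('a \<Rightarrow> 'o list set) \<Rightarrow> ('a \<Rightarrow> 'o list) set" where
  "profiles Sig = {P. \<forall>j. P j \<in> Sig j}"

definition top_choice ::
  "('a \<Rightarrow> 'o list set) \<Rightarrow> (('a \<Rightarrow> 'o list) \<Rightarrow> 'o) \<Rightarrow> bool" where
  "top_choice Sig f \<longleftrightarrow>
     (\<exists>g :: ('a \<Rightarrow> 'o) \<Rightarrow> 'o.
        (\<forall>P\<in>profiles Sig. f P = g (\<lambda>j. top (P j))) \<and>
        (\<forall>j (v :: 'a \<Rightarrow> 'o) a b. g (v(j := a)) = b \<longrightarrow> g (v(j := b)) = b))"

definition pseudomonotone ::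
  "('a \<Rightarrow> 'o list set) \<Rightarrow> (('a \<Rightarrow> 'o list) \<Rightarrow> 'o) \<Rightarrow> bool" where
  "pseudomonotone Sig f \<longleftrightarrow>
     (\<forall>j. \<forall>P\<in>profiles Sig. \<forall>xs'\<in>Sig j.
        (let a = f P; b = f (P(j := xs')) in
          a = b \<or> prefers (P j) a b \<or>
          (\<exists>c. prefers (P j) c b \<and> pos (P j) c < pos xs' c)))"

definition lex_dom :: "'o list \<Rightarrow> 'o pmf \<Rightarrow> 'o pmf \<Rightarrow> bool" where
  "lex_dom xs p q \<longleftrightarrow> p \<noteq> q \<and>
     (\<exists>i<length xs. (\<forall>k<i. pmf p (xs ! k) = pmf q (xs ! k)) \<and>
                    pmf p (xs ! i) > pmf q (xs ! i))"

definition lex_truthful ::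
  "('a \<Rightarrow> 'o list set) \<Rightarrow> (('a \<Rightarrow> 'o list) \<Rightarrow> 'o pmf) \<Rightarrow> bool" where
  "lex_truthful Sig M \<longleftrightarrow>
     (\<forall>j. \<forall>P\<in>profiles Sig. \<forall>xs'\<in>Sig j.
        M P = M (P(j := xs')) \<or> lex_dom (P j) (M P) (M (P(j := xs'))))"

definition eps_implements ::
  "('a \<Rightarrow> 'o list set) \<Rightarrow> real \<Rightarrow> (('a \<Rightarrow> 'o list) \<Rightarrow> 'o pmf) \<Rightarrow> (('a \<Rightarrow> 'o list) \<Rightarrow> 'o) \<Rightarrow> bool" where
  "eps_implements Sig \<epsilon> M f \<longleftrightarrow> (\<forall>P\<in>profiles Sig. pmf (M P) (f P) \<ge> 1 - \<epsilon>)"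

end

theory Submission imports Defs begin

lemma order_len: "is_order (xs::'o::finite list) \<Longrightarrow> length xs = CARD('o)"
  unfolding is_order_def by (metis distinct_card)

lemma pos_nth: assumes "is_order xs" "i < length xs" shows "pos xs (xs!i) = i"
  unfolding pos_def
proof (rule Least_equality)
  show "i < length xs \<and> xs ! i = xs ! i" using assms by simp
  fix y assume "y < length xs \<and> xs ! y = xs ! i"
  then show "i \<le> y" using assms unfolding is_order_def using nth_eq_iff_index_eq by fastforce
qed

lemma pos_lt: assumes "is_order xs" shows "pos xs a < length xs \<and> xs ! pos xs a = a"
proof -
  have "a \<in> set xs" using assms unfolding is_order_def by auto
  then have "\<exists>i. i < length xs \<and> xs ! i = a" by (simp add: in_set_conv_nth)
  then show ?thesis unfolding pos_def by (rule LeastI_ex)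
qed

definition wt :: "nat \<Rightarrow> nat \<Rightarrow> real" where
  "wt n k = real (n - k) / (\<Sum>i<n. real (n - i))"

definition Q :: "'o::finite list \<Rightarrow> 'o pmf" where
  "Q xs = pmf_of_list (map (\<lambda>k. (xs!k, wt CARD('o) k)) [0..<CARD('o)])"

lemma S_pos: "n > 0 \<Longrightarrow> (\<Sum>i<n. real (n - i)) > 0"
  by (rule sum_pos2[of _ 0]) auto

lemma wt_mono: "i < p \<Longrightarrow> p < n \<Longrightarrow> wt n p < wt n i"
  unfolding wt_def using S_pos[of n] by (intro divide_strict_right_mono) auto

lemma Q_wf: "pmf_of_list_wf (map (\<lambda>k. (xs!k, wt CARD('o::finite) k)) [0..<CARD('o)])"
proof (rule pmf_of_list_wfI)
  fix x assume "x \<in> set (map snd (map (\<lambda>k. (xs!k, wt CARD('o) k)) [0..<CARD('o)]))"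
  then show "x \<ge> 0" using S_pos[of "CARD('o)"] by (auto simp: wt_def)
next
  have "sum_list (map snd (map (\<lambda>k. (xs!k, wt CARD('o) k)) [0..<CARD('o)])) = (\<Sum>k<CARD('o). wt CARD('o) k)"
    by (simp add: o_def sum_list_distinct_conv_sum_set lessThan_atLeast0)
  also have "\<dots> = 1" unfolding wt_def using S_pos[of "CARD('o)"]
    by (simp add: sum_divide_distrib[symmetric])
  finally show "sum_list (map snd (map (\<lambda>k. (xs!k, wt CARD('o) k)) [0..<CARD('o)])) = 1" .
qed

lemma filter_single: "i < n \<Longrightarrow> filter (\<lambda>k. k = i) [0..<n] = [i]"
  by (induction n) auto

lemma pmf_Q: assumes "is_order (xs::'o::finite list)" shows "pmf (Q xs) a = wt CARD('o) (pos xs a)"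
proof -
  let ?n = "CARD('o)"
  have L: "length xs = ?n" using assms order_len by blast
  obtain i where i: "i < ?n" "xs!i = a" "pos xs a = i" using pos_lt[OF assms, of a] L by auto
  have "filter (\<lambda>k. xs!k = a) [0..<?n] = filter (\<lambda>k. k = i) [0..<?n]"
    using assms i L unfolding is_order_def by (intro filter_cong) (auto simp: nth_eq_iff_index_eq)
  also have "\<dots> = [i]" using i filter_single by blast
  finally have F: "filter (\<lambda>k. xs!k = a) [0..<?n] = [i]" .
  show ?thesis unfolding Q_def pmf_pmf_of_list[OF Q_wf]
    by (simp add: filter_map o_def F i)
qed


lemma key_tc:
  assumes tc: "top_choice Sig f" and P: "P \<in> profiles Sig" and xs': "xs' \<in> Sig j"
    and ne: "f P \<noteq> f (P(j := xs'))"
  shows "top (P j) \<noteq> top xs' \<and> f (P(j := xs')) \<noteq> top (P j)"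
proof -
  obtain g where g1: "\<forall>P\<in>profiles Sig. f P = g (\<lambda>j. top (P j))"
    and g2: "\<forall>j (v :: 'a \<Rightarrow> 'b) a b. g (v(j := a)) = b \<longrightarrow> g (v(j := b)) = b"
    using tc unfolding top_choice_def by blast
  define v where "v = (\<lambda>i. top (P i))"
  have P': "P(j := xs') \<in> profiles Sig" using P xs' by (auto simp: profiles_def)
  have a: "f P = g v" using g1 P v_def by auto
  have vv: "(\<lambda>i. top ((P(j := xs')) i)) = v(j := top xs')" by (auto simp: v_def)
  have b: "f (P(j := xs')) = g (v(j := top xs'))" using g1 P' vv by metis
  have vj: "v(j := top (P j)) = v" by (auto simp: v_def)
  show ?thesis
  proof
    show "top (P j) \<noteq> top xs'"
    proof
      assume "top (P j) = top xs'"
      then have "v(j := top xs') = v" using vj by simp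
      then show False using ne a b by simp
    qed
    show "f (P(j := xs')) \<noteq> top (P j)"
    proof
      assume h: "f (P(j := xs')) = top (P j)"
      then have "g (v(j := top (P j))) = top (P j)" using g2 b by metis
      then show False using ne a h vj by simp
    qed
  qed
qed

lemma hd_nth0: "is_order (xs::'o::finite list) \<Longrightarrow> top xs = xs ! 0"
proof -
  assume o: "is_order xs"
  have "length xs > 0" using order_len[OF o] by simp
  then show ?thesis unfolding top_def by (simp add: hd_conv_nth)
qed

lemma pos0: "is_order (xs::'o::finite list) \<Longrightarrow> (pos xs a = 0) = (a = xs ! 0)"
proof -
  assume o: "is_order xs"
  have l: "length xs > 0" using order_len[OF o] by simp
  show ?thesis
  proof
    assume "pos xs a = 0" then show "a = xs ! 0" using pos_lt[OF o, of a] by simp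
  next
    assume "a = xs ! 0" then show "pos xs a = 0" using pos_nth[OF o l] by simp
  qed
qed

lemma part1:
  fixes Sig :: "'a \<Rightarrow> 'o::finite list set"
  assumes vd: "valid_domain Sig" and tc: "top_choice Sig f"
  shows "pseudomonotone Sig f"
  unfolding pseudomonotone_def Let_def
proof (intro allI ballI)
  fix j P xs' assume P: "P \<in> profiles Sig" and xs': "xs' \<in> Sig j"
  have o1: "is_order (P j)" using vd P by (auto simp: valid_domain_def profiles_def)
  have o2: "is_order xs'" using vd xs' by (auto simp: valid_domain_def)
  show "f P = f (P(j := xs')) \<or> prefers (P j) (f P) (f (P(j := xs'))) \<or>
        (\<exists>c. prefers (P j) c (f (P(j := xs'))) \<and> pos (P j) c < pos xs' c)"
  proof (cases "f P = f (P(j := xs'))")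
    case False
    from key_tc[OF tc P xs' False] have h: "top (P j) \<noteq> top xs'" "f (P(j := xs')) \<noteq> top (P j)" by blast+
    have t1: "pos (P j) (top (P j)) = 0" using pos0[OF o1] hd_nth0[OF o1] by blast
    have t2: "pos (P j) (f (P(j := xs'))) \<noteq> 0"
      using h(2) pos0[OF o1, of "f (P(j := xs'))"] hd_nth0[OF o1] by argo
    have t3: "pos xs' (top (P j)) \<noteq> 0"
      using h(1) pos0[OF o2, of "top (P j)"] hd_nth0[OF o2] by argo
    have "prefers (P j) (top (P j)) (f (P(j := xs')))"
      using t1 t2 unfolding prefers_def by linarith
    moreover have "pos (P j) (top (P j)) < pos xs' (top (P j))"
      using t1 t3 by linarith
    ultimately show ?thesis by blast
  qed simp
qed


lemma lex_core:
  fixes xs xs' :: "'o::finite list" and p q :: "'o pmf"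
  assumes o1: "is_order xs" and o2: "is_order xs'"
    and D: "\<And>x. pmf p x - pmf q x = c * (wt CARD('o) (pos xs x) - wt CARD('o) (pos xs' x))
                 + d * ((if a = x then 1 else 0) - (if b = x then 1 else 0))"
    and c: "c > 0" and d: "d \<ge> 0"
    and ab: "a = b \<or> (xs!0 \<noteq> xs'!0 \<and> b \<noteq> xs!0)"
  shows "p = q \<or> lex_dom xs p q"
proof -
  let ?n = "CARD('o)"
  have L1: "length xs = ?n" and L2: "length xs' = ?n" using o1 o2 order_len by blast+
  have n0: "?n > 0" by simp
  show ?thesis
  proof (cases "a = b")
    case ab': True
    show ?thesis
    proof (cases "xs = xs'")
      case True
      have "pmf p x = pmf q x" for x using D[of x] ab' True by simp
      then show ?thesis by (simp add: pmf_eqI)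
    next
      case False
      have ex: "\<exists>k. k < ?n \<and> xs!k \<noteq> xs'!k"
        using False L1 L2 nth_equalityI by metis
      define k where "k = (LEAST k. k < ?n \<and> xs!k \<noteq> xs'!k)"
      have k: "k < ?n" "xs!k \<noteq> xs'!k" using LeastI_ex[OF ex] unfolding k_def by blast+
      have before: "\<And>i. i < k \<Longrightarrow> xs!i = xs'!i"
        using not_less_Least k unfolding k_def by (metis (mono_tags, lifting) order.strict_trans)
      have z: "pmf p (xs!i) = pmf q (xs!i)" if i: "i < k" for i
      proof -
        have "pos xs (xs!i) = i" using pos_nth[OF o1] i k L1 by simp
        moreover have "pos xs' (xs!i) = i" using pos_nth[OF o2] i k L2 before[OF i] by simp
        ultimately show ?thesis using D[of "xs!i"] ab' by simp
      qed
      define r where "r = pos xs' (xs!k)"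
      have r: "r < ?n" "xs'!r = xs!k" using pos_lt[OF o2, of "xs!k"] L2 unfolding r_def by auto
      have "r \<noteq> k" using r k by auto
      moreover have "\<not> r < k"
      proof
        assume "r < k"
        then have "xs!r = xs!k" using before r by simp
        then have "r = k" using o1 r k L1 unfolding is_order_def by (simp add: nth_eq_iff_index_eq)
        then show False using \<open>r < k\<close> by simp
      qed
      ultimately have "k < r" by simp
      then have w: "wt ?n r < wt ?n k" using wt_mono r by blast
      have pk: "pos xs (xs!k) = k" using pos_nth[OF o1] k L1 by simp
      have "c * (wt ?n k - wt ?n r) > 0" using c w by simp
      then have pos: "pmf p (xs!k) > pmf q (xs!k)"
        using D[of "xs!k"] ab' pk unfolding r_def[symmetric] by simp
      then have "p \<noteq> q" by auto
      then show ?thesis unfolding lex_dom_def using k(1) L1 z pos by auto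
    qed
  next
    case False
    with ab have h: "xs!0 \<noteq> xs'!0" "b \<noteq> xs!0" by auto
    define r where "r = pos xs' (xs!0)"
    have r: "r < ?n" "xs'!r = xs!0" using pos_lt[OF o2, of "xs!0"] L2 unfolding r_def by auto
    have "r \<noteq> 0" using r h by (metis gr0I)
    then have w: "wt ?n r < wt ?n 0" using wt_mono r by blast
    have pk: "pos xs (xs!0) = 0" using pos_nth[OF o1] n0 L1 by simp
    have "c * (wt ?n 0 - wt ?n r) > 0" using c w by simp
    moreover have "d * ((if a = xs!0 then 1 else 0) - (if b = xs!0 then 1 else 0)) \<ge> 0"
      using d h by simp
    ultimately have pos: "pmf p (xs!0) > pmf q (xs!0)"
      using D[of "xs!0"] unfolding pk r_def[symmetric] by linarith
    then have "p \<noteq> q" by auto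
    then show ?thesis unfolding lex_dom_def using n0 L1 pos by (intro disjI2 conjI exI[of _ 0]) auto
  qed
qed


definition Mech :: "real \<Rightarrow> (('a::finite \<Rightarrow> 'o::finite list) \<Rightarrow> 'o) \<Rightarrow> ('a \<Rightarrow> 'o list) \<Rightarrow> 'o pmf" where
  "Mech e f P = bind_pmf (bernoulli_pmf e)
     (\<lambda>b. if b then bind_pmf (pmf_of_set UNIV) (\<lambda>i. Q (P i)) else return_pmf (f P))"

lemma pmf_Mech:
  fixes P :: "'a::finite \<Rightarrow> 'o::finite list"
  assumes "0 \<le> e" "e \<le> 1"
  shows "pmf (Mech e f P) x = e * ((\<Sum>i\<in>UNIV. pmf (Q (P i)) x) / real CARD('a::finite))
           + (1 - e) * (if f P = x then 1 else 0)"
  unfolding Mech_def pmf_bind using assms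
  by (simp add: pmf_bind_pmf_of_set indicator_def)

lemma sum_upd:
  fixes g :: "'o list \<Rightarrow> real" and P :: "'a::finite \<Rightarrow> 'o list"
  shows "(\<Sum>i\<in>UNIV. g ((P(j := xs')) i)) = (\<Sum>i\<in>UNIV. g (P i)) - g (P j) + g xs'"
proof -
  have "(\<Sum>i\<in>UNIV. g ((P(j := xs')) i)) = g xs' + (\<Sum>i\<in>UNIV - {j}. g ((P(j := xs')) i))"
    by (subst sum.remove[of UNIV j]) auto
  also have "(\<Sum>i\<in>UNIV - {j}. g ((P(j := xs')) i)) = (\<Sum>i\<in>UNIV - {j}. g (P i))"
    by (rule sum.cong) auto
  also have "(\<Sum>i\<in>UNIV - {j}. g (P i)) = (\<Sum>i\<in>UNIV. g (P i)) - g (P j)"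
    by (subst sum.remove[of UNIV j]) auto
  finally show ?thesis by simp
qed

theorem theorem18:
  fixes Sig :: "'a::finite \<Rightarrow> 'o::finite list set"
    and f :: "('a \<Rightarrow> 'o list) \<Rightarrow> 'o"
  assumes "valid_domain Sig"
    and "top_choice Sig f"
  shows "pseudomonotone Sig f \<and>
         (\<forall>\<epsilon>::real. \<epsilon> > 0 \<longrightarrow>
            (\<exists>M :: ('a \<Rightarrow> 'o list) \<Rightarrow> 'o pmf. lex_truthful Sig M \<and> eps_implements Sig \<epsilon> M f))"
proof (intro conjI allI impI)
  show "pseudomonotone Sig f" using part1 assms by blast
next
  fix \<epsilon> :: real assume ep: "\<epsilon> > 0"
  define e where "e = min \<epsilon> (1/2)"
  have e0: "0 < e" "e \<le> 1/2" "e \<le> \<epsilon>" using ep unfolding e_def by auto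
  let ?M = "Mech e f"
  let ?m = "real CARD('a)"
  have m0: "?m > 0" by simp
  have ge: "0 \<le> e" "e \<le> 1" using e0 by auto
  have "eps_implements Sig \<epsilon> ?M f"
    unfolding eps_implements_def
  proof
    fix P assume "P \<in> profiles Sig"
    have "(\<Sum>i\<in>UNIV. pmf (Q (P i)) (f P)) / ?m \<ge> 0" by (simp add: sum_nonneg)
    then have "e * ((\<Sum>i\<in>UNIV. pmf (Q (P i)) (f P)) / ?m) \<ge> 0" using e0
      by (intro mult_nonneg_nonneg) auto
    then show "pmf (?M P) (f P) \<ge> 1 - \<epsilon>" using pmf_Mech[of e f P "f P"] e0 by simp
  qed
  moreover have "lex_truthful Sig ?M"
    unfolding lex_truthful_def
  proof (intro allI ballI)
    fix j P xs' assume P: "P \<in> profiles Sig" and xs': "xs' \<in> Sig j"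
    have o1: "is_order (P j)" using assms(1) P by (auto simp: valid_domain_def profiles_def)
    have o2: "is_order xs'" using assms(1) xs' by (auto simp: valid_domain_def)
    have ab: "f P = f (P(j := xs')) \<or> ((P j)!0 \<noteq> xs'!0 \<and> f (P(j := xs')) \<noteq> (P j)!0)"
      using key_tc[OF assms(2) P xs'] hd_nth0[OF o1] hd_nth0[OF o2] by metis
    have D: "pmf (?M P) x - pmf (?M (P(j := xs'))) x =
       (e / ?m) * (wt CARD('o) (pos (P j) x) - wt CARD('o) (pos xs' x))
       + (1 - e) * ((if f P = x then 1 else 0) - (if f (P(j := xs')) = x then 1 else 0))" for x
    proof -
      have s: "(\<Sum>i\<in>UNIV. pmf (Q ((P(j := xs')) i)) x) =
           (\<Sum>i\<in>UNIV. pmf (Q (P i)) x) - pmf (Q (P j)) x + pmf (Q xs') x"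
        using sum_upd[of "\<lambda>l. pmf (Q l) x" P j xs'] by simp
      show ?thesis using e0
        unfolding pmf_Mech[OF ge, of f P x] pmf_Mech[OF ge, of f "P(j := xs')" x] s
          pmf_Q[OF o1] pmf_Q[OF o2]
        by (simp add: field_simps)
    qed
    have "?M P = ?M (P(j := xs')) \<or> lex_dom (P j) (?M P) (?M (P(j := xs')))"
      by (rule lex_core[OF o1 o2 D _ _ ab]) (use e0 m0 in auto)
    then show "?M P = ?M (P(j := xs')) \<or> lex_dom (P j) (?M P) (?M (P(j := xs')))" .
  qed
  ultimately show "\<exists>M :: ('a \<Rightarrow> 'o list) \<Rightarrow> 'o pmf. lex_truthful Sig M \<and> eps_implements Sig \<epsilon> M f"
    by blast
qed

end
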